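(* Let $\mathcal{Q}_A,\mathcal{K}_A,\mathcal{Q}_B,\mathcal{K}_B$ be finite nonempty sets of values, and let $\mathrm{pred}_A:\mathcal{Q}_A\times\mathcal{K}_A\to\{0,1\}$ and $\mathrm{pred}_B:\mathcal{Q}_B\times\mathcal{K}_B\to\{0,1\}$ be predicates. Let the disjoint union $\mathcal{Q}_A\sqcup\mathcal{K}_A\sqcup\mathcal{Q}_B\sqcup\mathcal{K}_B$ index an orthonormal family of vectors $e_v\in\mathbb{R}^d$ (so the four value sets are embedded one-hot in mutually orthogonal subspaces $Q_A,K_A,Q_B,K_B$). A query token carries a pair $(a,b)\in\mathcal{Q}_A\times\mathcal{Q}_B$ with query vector $e_a+e_b$, and a key token carries a pair $(a',b')\in\mathcal{K}_A\times\mathcal{K}_B$ with key vector $e_{a'}+e_{b'}$. Define the combined selection $$S\big((a,b),(a',b')\big)=\mathrm{pred}_A(a,a')\ \vee\ \mathrm{pred}_B(b,b').$$ Suppose there is a matrix $W\in\mathbb{R}^{d\times d}$ such that the logits $L\big((a,b),(a',b')\big)=(e_a+e_b)^\top W(e_{a'}+e_{b'})$ satisfy, for every query $q\in\mathcal{Q}_A\times\mathcal{Q}_B$ and all keys $k,k'\in\mathcal{K}_A\times\mathcal{K}_B$: (i) if $S(q,k)=S(q,k')=1$ then $L(q,k)=L(q,k')$; and (ii) if $S(q,k)=1$ and $S(q,k')=0$ then $L(q,k)>L(q,k')$. (These are the conditions under which, in the zero-temperature limit $T\to0^+$ of $\mathrm{softmax}(T^{-1}L)$ over any set of key tokens, the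 attention weights converge to the uniform distribution over the tokens selected by $S$, i.e. to the normalized weights of the selector "$\mathrm{select}(\mathrm{query}_A,\mathrm{key}_A,\mathrm{pred}_A)$ or $\mathrm{select}(\mathrm{query}_B,\mathrm{key}_B,\mathrm{pred}_B)$".) Then either $\mathrm{pred}_A$ is constant, or $\mathrm{pred}_B$ is constant, or both predicates have rank one, meaning there exist functions $f_A:\mathcal{Q}_A\to\{0,1\}$, $g_A:\mathcal{K}_A\to\{0,1\}$ with $\mathrm{pred}_A(a,a')=f_A(a)\wedge g_A(a')$ for all $a,a'$, and likewise $f_B,g_B$ with $\mathrm{pred}_B(b,b')=f_B(b)\wedge g_B(b')$ for all $b,b'$.
   Context: This concerns implementing a Boolean "or" of two RASP selectors as a single attention head. A RASP selector $\mathrm{select}(\mathrm{query},\mathrm{key},\mathrm{pred})$ evaluated on a sequence gives the $0/1$ matrix whose $(i,j)$ entry is $\mathrm{pred}(\mathrm{query}_i,\mathrm{key}_j)$. An attention head with bilinear form $W$ (the $W_{QK}$ matrix) assigns to query token $i$ and key token $j$ the logit $x_i^\top W x_j$, where $x_i$ is the token's residual-stream vector, and attention weights are $\mathrm{softmax}$ of the logits scaled by an inverse temperature $T^{-1}$. *)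

theory Defs
  imports "HOL-Analysis.Analysis"
begin

text \<open>The four value sets are finite (nonempty) types 'qa, 'ka, 'qb, 'kb; their disjoint
union is the sum type 'qa + 'ka + 'qb + 'kb, which indexes the family of vectors e.\<close>

definition orthonormal_family :: "('i \<Rightarrow> real ^ 'd) \<Rightarrow> bool" where
  "orthonormal_family e \<longleftrightarrow> (\<forall>u v. e u \<bullet> e v = (if u = v then 1 else 0))"

definition query_vec :: "('qa + 'ka + 'qb + 'kb \<Rightarrow> real ^ 'd) \<Rightarrow> 'qa \<times> 'qb \<Rightarrow> real ^ 'd" where
  "query_vec e q = e (Inl (fst q)) + e (Inr (Inr (Inl (snd q))))"

definition key_vec :: "('qa + 'ka + 'qb + 'kb \<Rightarrow> real ^ 'd) \<Rightarrow> 'ka \<times> 'kb \<Rightarrow> real ^ 'd" where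
  "key_vec e k = e (Inr (Inl (fst k))) + e (Inr (Inr (Inr (snd k))))"

definition logit :: "('qa + 'ka + 'qb + 'kb \<Rightarrow> real ^ 'd) \<Rightarrow> real ^ 'd ^ 'd
                     \<Rightarrow> 'qa \<times> 'qb \<Rightarrow> 'ka \<times> 'kb \<Rightarrow> real" where
  "logit e W q k = query_vec e q \<bullet> (W *v key_vec e k)"

definition sel_or :: "('qa \<Rightarrow> 'ka \<Rightarrow> bool) \<Rightarrow> ('qb \<Rightarrow> 'kb \<Rightarrow> bool)
                      \<Rightarrow> 'qa \<times> 'qb \<Rightarrow> 'ka \<times> 'kb \<Rightarrow> bool" where
  "sel_or pA pB q k \<longleftrightarrow> pA (fst q) (fst k) \<or> pB (snd q) (snd k)"

definition const_pred :: "('q \<Rightarrow> 'k \<Rightarrow> bool) \<Rightarrow> bool" where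
  "const_pred p \<longleftrightarrow> (\<exists>c. \<forall>a a'. p a a' = c)"

definition rank_one_pred :: "('q \<Rightarrow> 'k \<Rightarrow> bool) \<Rightarrow> bool" where
  "rank_one_pred p \<longleftrightarrow> (\<exists>f g. \<forall>a a'. p a a' = (f a \<and> g a'))"

end

theory Submission
  imports Defs
begin

lemma half:
  fixes pA :: "'qa \<Rightarrow> 'ka \<Rightarrow> bool" and pB :: "'qb \<Rightarrow> 'kb \<Rightarrow> bool"
    and L :: "'qa \<Rightarrow> 'qb \<Rightarrow> 'ka \<Rightarrow> 'kb \<Rightarrow> real"
  assumes qex: "\<And>a1 a2 b1 b2 x y. L a1 b1 x y + L a2 b2 x y = L a1 b2 x y + L a2 b1 x y"
    and kex: "\<And>a b x1 x2 y1 y2. L a b x1 y1 + L a b x2 y2 = L a b x1 y2 + L a b x2 y1"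
    and eq: "\<And>a b x y x' y'. pA a x \<or> pB b y \<Longrightarrow> pA a x' \<or> pB b y' \<Longrightarrow> L a b x y = L a b x' y'"
    and gt: "\<And>a b x y x' y'. pA a x \<or> pB b y \<Longrightarrow> \<not> (pA a x' \<or> pB b y') \<Longrightarrow> L a b x y > L a b x' y'"
    and p1: "pA a0 s1" and p0: "\<not> pA a0 s0"
  shows "const_pred pB \<or> (rank_one_pred pA \<and> rank_one_pred pB)"
proof -
  have rows: "(\<forall>y. pB b y) \<or> (\<forall>y. \<not> pB b y)" for b
  proof (rule ccontr)
    assume "\<not> ?thesis"
    then obtain t1 t0 where t1: "pB b t1" and t0: "\<not> pB b t0" by blast
    have "L a0 b s1 t1 = L a0 b s1 t0" using eq p1 by blast
    moreover have "L a0 b s1 t1 = L a0 b s0 t1" using eq p1 t1 by blast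
    moreover have "L a0 b s1 t1 > L a0 b s0 t0" using gt p1 p0 t0 by blast
    moreover have "L a0 b s1 t1 + L a0 b s0 t0 = L a0 b s1 t0 + L a0 b s0 t1" by (rule kex)
    ultimately show False by linarith
  qed
  have rB: "rank_one_pred pB"
    unfolding rank_one_pred_def
    by (rule exI[of _ "\<lambda>b. \<forall>y. pB b y"], rule exI[of _ "\<lambda>_. True"]) (use rows in blast)
  show ?thesis
  proof (cases "const_pred pB")
    case True then show ?thesis by blast
  next
    case False
    then obtain b1 y1 b2 y2 where "pB b1 y1" "\<not> pB b2 y2"
      unfolding const_pred_def by metis
    then obtain bF bE where bF: "\<And>y. pB bF y" and bE: "\<And>y. \<not> pB bE y"
      using rows by metis
    fix y0
    have key: "pA a1 y" if h1: "pA a1 x" and h2: "pA a2 y" for a1 a2 x y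
    proof (rule ccontr)
      assume ny: "\<not> pA a1 y"
      have g1: "L a1 bE x y0 > L a1 bE y y0" using gt[of a1 x bE y0 y y0] h1 ny bE by blast
      have g2: "L a2 bE y y0 \<ge> L a2 bE x y0"
      proof (cases "pA a2 x")
        case True then show ?thesis using eq[of a2 y bE y0 x y0] h2 by simp
      next
        case False then show ?thesis using gt[of a2 y bE y0 x y0] h2 bE by fastforce
      qed
      have f1: "L a1 bF x y0 = L a1 bF y y0" using eq bF by blast
      have f2: "L a2 bF x y0 = L a2 bF y y0" using eq bF by blast
      have "L a1 bE x y0 + L a2 bF x y0 = L a1 bF x y0 + L a2 bE x y0" by (rule qex)
      moreover have "L a1 bE y y0 + L a2 bF y y0 = L a1 bF y y0 + L a2 bE y y0" by (rule qex)
      ultimately show False using g1 g2 f1 f2 by linarith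
    qed
    have "rank_one_pred pA"
      unfolding rank_one_pred_def
      by (rule exI[of _ "\<lambda>a. \<exists>x. pA a x"], rule exI[of _ "\<lambda>y. \<exists>a. pA a y"]) (use key in blast)
    with rB show ?thesis by blast
  qed
qed

theorem mainTheorem1:
  fixes predA :: "'qa::finite \<Rightarrow> 'ka::finite \<Rightarrow> bool"
    and predB :: "'qb::finite \<Rightarrow> 'kb::finite \<Rightarrow> bool"
    and e :: "'qa + 'ka + 'qb + 'kb \<Rightarrow> real ^ 'd::finite"
    and W :: "real ^ 'd ^ 'd"
  assumes "orthonormal_family e"
    and eq: "\<And>q k k'. sel_or predA predB q k \<Longrightarrow> sel_or predA predB q k'
               \<Longrightarrow> logit e W q k = logit e W q k'"
    and gt: "\<And>q k k'. sel_or predA predB q k \<Longrightarrow> \<not> sel_or predA predB q k'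
               \<Longrightarrow> logit e W q k > logit e W q k'"
  shows "const_pred predA \<or> const_pred predB \<or> (rank_one_pred predA \<and> rank_one_pred predB)"
proof -
  define L where "L a b x y = logit e W (a,b) (x,y)" for a b x y
  have exp: "L a b x y = e (Inl a) \<bullet> (W *v e (Inr (Inl x))) + e (Inl a) \<bullet> (W *v e (Inr (Inr (Inr y))))
     + e (Inr (Inr (Inl b))) \<bullet> (W *v e (Inr (Inl x))) + e (Inr (Inr (Inl b))) \<bullet> (W *v e (Inr (Inr (Inr y))))"
    for a b x y
    unfolding L_def logit_def query_vec_def key_vec_def
    by (simp add: inner_add_left inner_add_right matrix_vector_right_distrib)
  have qex: "L a1 b1 x y + L a2 b2 x y = L a1 b2 x y + L a2 b1 x y" for a1 a2 b1 b2 x y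
    unfolding exp by linarith
  have kex: "L a b x1 y1 + L a b x2 y2 = L a b x1 y2 + L a b x2 y1" for a b x1 x2 y1 y2
    unfolding exp by linarith
  have eq': "L a b x y = L a b x' y'" if "predA a x \<or> predB b y" "predA a x' \<or> predB b y'" for a b x y x' y'
    using eq[of "(a,b)" "(x,y)" "(x',y')"] that unfolding L_def sel_or_def by simp
  have gt': "L a b x y > L a b x' y'" if "predA a x \<or> predB b y" "\<not> (predA a x' \<or> predB b y')" for a b x y x' y'
    using gt[of "(a,b)" "(x,y)" "(x',y')"] that unfolding L_def sel_or_def by simp
  define L' where "L' b a y x = L a b x y" for a b x y
  show ?thesis
  proof (cases "\<exists>a s1 s0. predA a s1 \<and> \<not> predA a s0")
    case True
    then obtain a s1 s0 where "predA a s1" "\<not> predA a s0" by blast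
    from half[where L=L and pA=predA and pB=predB, OF qex kex eq' gt' this] show ?thesis by blast
  next
    case nA: False
    show ?thesis
    proof (cases "\<exists>b t1 t0. predB b t1 \<and> \<not> predB b t0")
      case True
      then obtain b t1 t0 where "predB b t1" "\<not> predB b t0" by blast
      have "const_pred predA \<or> (rank_one_pred predB \<and> rank_one_pred predA)"
      proof (rule half[where L=L' and pA=predB and pB=predA])
        show "L' b1 b2 x y + L' a2 a1 x y = L' b1 a1 x y + L' a2 b2 x y" for b1 b2 a1 a2 x y
          unfolding L'_def by (metis qex add.commute)
        show "L' a b x1 y1 + L' a b x2 y2 = L' a b x1 y2 + L' a b x2 y1" for a b x1 x2 y1 y2
          unfolding L'_def by (metis kex add.commute)
        show "L' a b x y = L' a b x' y'" if "predB a x \<or> predA b y" "predB a x' \<or> predA b y'" for a b x y x' y'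
          unfolding L'_def using eq' that by blast
        show "L' a b x y > L' a b x' y'" if "predB a x \<or> predA b y" "\<not> (predB a x' \<or> predA b y')" for a b x y x' y'
          unfolding L'_def using gt' that by blast
      qed fact+
      then show ?thesis by blast
    next
      case nB: False
      have "rank_one_pred predA" unfolding rank_one_pred_def
        by (rule exI[of _ "\<lambda>a. \<forall>y. predA a y"], rule exI[of _ "\<lambda>_. True"]) (use nA in blast)
      moreover have "rank_one_pred predB" unfolding rank_one_pred_def
        by (rule exI[of _ "\<lambda>a. \<forall>y. predB a y"], rule exI[of _ "\<lambda>_. True"]) (use nB in blast)
      ultimately show ?thesis by blast
    qed
  qed
qed

end
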